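(* There exist absolute constants $c_1,c_2>0$ such that for every $\gamma\ge1$ there exists a model class $\mathcal M\subseteq\mathcal M^+$ such that for all $\varepsilon\in(0,1)$, $$\mathrm{dec}^{\mathrm c}_{\mathrm r,\varepsilon}(\mathcal M)=\sup_{\bar M\in\mathrm{co}(\mathcal M)}\mathrm{dec}^{\mathrm c}_{\mathrm r,\varepsilon}(\mathcal M\cup\{\bar M\},\bar M)\le c_1\varepsilon^2\gamma^{1/2}$$ (in particular $\mathrm{dec}^{\mathrm c}_{\mathrm r,\varepsilon}(\mathcal M)\le c_1\varepsilon$ for $\varepsilon\le\gamma^{-1/2}$), yet there exists $\bar M\in\mathcal M$ with $\mathrm{dec}^{\mathrm o}_{\mathrm r,\gamma}(\mathcal M,\bar M)\ge c_2\gamma^{-1/2}$.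
   Context: Models are kernels $M:\Pi\to\Delta([0,1]\times\mathcal O)$ (for some decision space $\Pi$ and observation space $\mathcal O$; rewards in $[0,1]$); $\mathcal M^+$ is the set of all models. $f^M(\pi)=\mathbb E_{(r,o)\sim M(\pi)}[r]$, $\pi_M\in\arg\max f^M$, $g^M(\pi)=f^M(\pi_M)-f^M(\pi)$; $D^2_H$ is squared Hellinger distance; $\mathrm{co}(\mathcal M)$ is the set of mixtures of models in $\mathcal M$. Constrained regret DEC $\mathrm{dec}^{\mathrm c}_{\mathrm r,\varepsilon}(\mathcal M',\bar M)=\inf_{p\in\Delta(\Pi)}\sup_{M\in\mathcal M'}\{\mathbb E_{\pi\sim p}[g^M(\pi)]:\mathbb E_{\pi\sim p}[D^2_H(M(\pi),\bar M(\pi))]\le\varepsilon^2\}$ (value $0$ if empty); offset regret DEC $\mathrm{dec}^{\mathrm o}_{\mathrm r,\gamma}(\mathcal M,\bar M)=\inf_{p}\sup_{M\in\mathcal M}\mathbb E_{\pi\sim p}[g^M(\pi)-\gamma D^2_H(M(\pi),\bar M(\pi))]$. *)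

theory Defs
  imports "HOL-Probability.Probability"
begin

text \<open>A model maps decisions to discrete distributions on
  reward x observation; rewards must lie in [0,1] (for decisions in Dec).\<close>

type_synonym model = "nat \<Rightarrow> (real \<times> nat) pmf"

definition models_all :: "nat set \<Rightarrow> model set" where
  "models_all Dec = {M. \<forall>\<pi>\<in>Dec. fst ` set_pmf (M \<pi>) \<subseteq> {0..1}}"

definition fval :: "model \<Rightarrow> nat \<Rightarrow> real" where
  "fval M \<pi> = measure_pmf.expectation (M \<pi>) fst"

definition gval :: "nat set \<Rightarrow> model \<Rightarrow> nat \<Rightarrow> real" where
  "gval Dec M \<pi> = (SUP \<pi>'\<in>Dec. fval M \<pi>') - fval M \<pi>"

text \<open>Squared Hellinger distance (without the factor 1/2).\<close>
definition hellinger_sq :: "'a pmf \<Rightarrow> 'a pmf \<Rightarrow> real" where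
  "hellinger_sq P Q = infsum (\<lambda>x. (sqrt (pmf P x) - sqrt (pmf Q x))\<^sup>2) UNIV"

definition dists_on :: "nat set \<Rightarrow> nat pmf set" where
  "dists_on Dec = {p. set_pmf p \<subseteq> Dec}"

text \<open>Constrained regret DEC (value 0 if the constraint set is empty).\<close>
definition dec_c :: "nat set \<Rightarrow> model set \<Rightarrow> model \<Rightarrow> real \<Rightarrow> real" where
  "dec_c Dec MM Mbar \<epsilon> =
     (INF p\<in>dists_on Dec.
        (let S = {measure_pmf.expectation p (gval Dec M) | M.
                    M \<in> MM \<and> measure_pmf.expectation p (\<lambda>\<pi>. hellinger_sq (M \<pi>) (Mbar \<pi>)) \<le> \<epsilon>\<^sup>2}
         in if S = {} then 0 else Sup S))"

definition dec_o :: "nat set \<Rightarrow> model set \<Rightarrow> model \<Rightarrow> real \<Rightarrow> real" where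
  "dec_o Dec MM Mbar \<gamma> =
     (INF p\<in>dists_on Dec. SUP M\<in>MM.
        measure_pmf.expectation p (\<lambda>\<pi>. gval Dec M \<pi> - \<gamma> * hellinger_sq (M \<pi>) (Mbar \<pi>)))"

text \<open>Mixtures of models in MM (mixing distributions with countable support).\<close>
definition co_models :: "model set \<Rightarrow> model set" where
  "co_models MM = {Mbar. \<exists>\<mu> :: model pmf. set_pmf \<mu> \<subseteq> MM \<and>
                          Mbar = (\<lambda>\<pi>. bind_pmf \<mu> (\<lambda>M. M \<pi>))}"

definition dec_c_glob :: "nat set \<Rightarrow> model set \<Rightarrow> real \<Rightarrow> real" where
  "dec_c_glob Dec MM \<epsilon> = (SUP Mbar\<in>co_models MM. dec_c Dec (MM \<union> {Mbar}) Mbar \<epsilon>)"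

end

theory Submission
  imports Defs
begin

lemma hell_fin:
  assumes "finite A" "set_pmf P \<subseteq> A" "set_pmf Q \<subseteq> A"
  shows "hellinger_sq P Q = (\<Sum>x\<in>A. (sqrt (pmf P x) - sqrt (pmf Q x))\<^sup>2)"
proof -
  have z: "pmf P x = 0" "pmf Q x = 0" if "x \<notin> A" for x
    using assms that by (meson pmf_eq_0_set_pmf subsetD)+
  have "hellinger_sq P Q = infsum (\<lambda>x. (sqrt (pmf P x) - sqrt (pmf Q x))\<^sup>2) A"
    unfolding hellinger_sq_def
    by (rule infsum_cong_neutral) (auto simp: z)
  then show ?thesis using assms(1) by simp
qed

lemma hell_nonneg: "hellinger_sq P Q \<ge> 0"
  unfolding hellinger_sq_def by (rule infsum_nonneg) simp

lemma hell_same: "hellinger_sq P P = 0"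
  unfolding hellinger_sq_def by simp

lemma exp_const_fst:
  fixes P :: "(real \<times> 'b) pmf"
  assumes "\<And>x. x \<in> set_pmf P \<Longrightarrow> fst x = c"
  shows "measure_pmf.expectation P fst = c"
proof -
  have "measure_pmf.expectation P fst = measure_pmf.expectation P (\<lambda>_. c)"
    by (rule integral_cong_AE) (auto simp: AE_measure_pmf_iff assms)
  also have "\<dots> = c" by (simp add: measure_pmf.prob_space)
  finally show ?thesis .
qed

locale cons_loc = fixes \<gamma> :: real assumes g1: "\<gamma> \<ge> 1"
begin

definition "eta = 1 / sqrt \<gamma>"
definition "NN = nat \<lceil>16*\<gamma>\<rceil>"
definition "DD = {0..NN}"
definition mdl :: "nat \<Rightarrow> model" where
  "mdl b \<pi> = (if \<pi> = 0 then (if b = 0 then return_pmf (0,0)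
      else map_pmf (\<lambda>x. if x then (0::real, b) else (0,0)) (bernoulli_pmf eta))
     else return_pmf (if \<pi> = b then 1 else 1/2, 0))"
definition "MMc = mdl ` DD"

lemma eta_pos: "0 < eta" and eta_le1: "eta \<le> 1"
  using g1 by (auto simp: eta_def)

lemma NN_ge: "real NN \<ge> 16*\<gamma>" and NN_pos: "NN \<ge> 1"
  using g1 unfolding NN_def by (linarith, linarith)

lemma fin_DD: "finite DD" and DD_ne: "DD \<noteq> {}"
  by (auto simp: DD_def)

lemma fval_mdl: "fval (mdl b) \<pi> = (if \<pi> = 0 then 0 else if \<pi> = b then 1 else 1/2)"
  unfolding fval_def mdl_def by (auto intro!: exp_const_fst simp del: integral_map_pmf)

lemma set_mdl_fin: "finite (set_pmf (mdl b \<pi>))"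
  unfolding mdl_def by auto

lemma set_mdl0: "set_pmf (mdl b 0) \<subseteq> {0} \<times> DD" if "b \<in> DD"
  using that unfolding mdl_def DD_def by auto

lemma sup_mdl: "b \<in> DD \<Longrightarrow> (SUP \<pi>\<in>DD. fval (mdl b) \<pi>) = (if b = 0 then 1/2 else 1)"
  unfolding fval_mdl
  apply (rule cSup_eq_maximum)
  using NN_pos
   apply (auto simp: DD_def image_iff)
  done

lemma gval_mdl: "b \<in> DD \<Longrightarrow> gval DD (mdl b) \<pi> =
   (if b = 0 then 1/2 else 1) - (if \<pi> = 0 then 0 else if \<pi> = b then 1 else 1/2)"
  unfolding gval_def sup_mdl fval_mdl by simp

lemma inj_mdl: "inj_on mdl DD"
proof (rule inj_onI)
  fix b b' assume "b \<in> DD" "b' \<in> DD" "mdl b = mdl b'"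
  show "b = b'"
  proof (rule ccontr)
    assume ne: "b \<noteq> b'"
    show False
    proof (cases "b = 0")
      case True
      then have "mdl b b' = mdl b' b'" using \<open>mdl b = mdl b'\<close> by simp
      then show ?thesis using ne True unfolding mdl_def by (auto split: if_splits)
    next
      case False
      then have "mdl b b = mdl b' b" using \<open>mdl b = mdl b'\<close> by simp
      then show ?thesis using ne False unfolding mdl_def by (auto split: if_splits)
    qed
  qed
qed

lemma MM_sub: "MMc \<subseteq> models_all DD"
  unfolding MMc_def models_all_def mdl_def by (auto split: if_splits)


lemma hell_return: "hellinger_sq (return_pmf x) (return_pmf y) = (if x = y then 0 else 2)"
proof (cases "x = y")
  case True then show ?thesis by (simp add: hell_same)
next
  case False
  have "hellinger_sq (return_pmf x) (return_pmf y) =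
    (\<Sum>z\<in>{x,y}. (sqrt (pmf (return_pmf x) z) - sqrt (pmf (return_pmf y) z))\<^sup>2)"
    by (rule hell_fin) auto
  also have "\<dots> = 2" using False by (simp add: indicator_def)
  finally show ?thesis using False by simp
qed

lemma pmf_inf1: "b \<noteq> 0 \<Longrightarrow> pmf (mdl b 0) (0, b) = eta"
proof -
  assume b: "b \<noteq> 0"
  have inj: "inj (\<lambda>x. if x then (0::real, b) else (0,0))" using b by (auto intro!: injI split: if_splits)
  show ?thesis unfolding mdl_def using b pmf_map_inj'[OF inj, of _ True] eta_pos eta_le1 by simp
qed

lemma pmf_inf0: "b \<noteq> 0 \<Longrightarrow> pmf (mdl b 0) (0, 0) = 1 - eta"
proof -
  assume b: "b \<noteq> 0"
  have inj: "inj (\<lambda>x. if x then (0::real, b) else (0,0))" using b by (auto intro!: injI split: if_splits)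
  show ?thesis unfolding mdl_def using b pmf_map_inj'[OF inj, of _ False] eta_pos eta_le1 by simp
qed

lemma pmf_inf_other: "b' \<noteq> b \<Longrightarrow> b \<noteq> 0 \<Longrightarrow> pmf (mdl b' 0) (0, b) = 0"
  unfolding mdl_def by (auto simp: pmf_eq_0_set_pmf)

lemma hell_inf: "hellinger_sq (mdl b 0) (mdl 0 0) \<le> 2 * eta"
proof (cases "b = 0")
  case True then show ?thesis using eta_pos by (simp add: hell_same)
next
  case False
  have "hellinger_sq (mdl b 0) (mdl 0 0) =
    (\<Sum>z\<in>{(0,0),(0,b)}. (sqrt (pmf (mdl b 0) z) - sqrt (pmf (mdl 0 0) z))\<^sup>2)"
    by (rule hell_fin) (auto simp: mdl_def)
  also have "\<dots> = (sqrt (1 - eta) - 1)\<^sup>2 + eta"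
    using False eta_pos by (simp add: pmf_inf0 pmf_inf1) (simp add: mdl_def)
  also have "\<dots> \<le> 2 * eta"
  proof -
    have x: "0 \<le> 1 - eta" "1 - eta \<le> 1" using eta_pos eta_le1 by auto
    have "1 - eta = sqrt (1 - eta) * sqrt (1 - eta)" using x by simp
    also have "\<dots> \<le> sqrt (1 - eta) * 1" using x by (intro mult_left_mono) auto
    finally have a: "1 - eta \<le> sqrt (1 - eta)" by simp
    have b: "sqrt (1 - eta) \<le> 1" using x by simp
    have "(sqrt (1 - eta) - 1)\<^sup>2 = (1 - sqrt (1 - eta)) * (1 - sqrt (1 - eta))" by (simp add: power2_eq_square algebra_simps)
    also have "\<dots> \<le> eta * 1" using a b x eta_pos by (intro mult_mono) auto
    finally show ?thesis by simp
  qed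
  finally show ?thesis .
qed

lemma exp_DD: "set_pmf p \<subseteq> DD \<Longrightarrow> measure_pmf.expectation p F = (\<Sum>a\<in>DD. F a * pmf p a)"
  by (rule integral_measure_pmf_real) (auto simp: fin_DD)

lemma pigeon:
  assumes "set_pmf p \<subseteq> DD"
  shows "\<exists>b\<in>{1..NN}. pmf p b \<le> 1 / real NN"
proof (rule ccontr)
  assume "\<not> ?thesis"
  then have lt: "\<forall>b\<in>{1..NN}. 1 / real NN < pmf p b" by auto
  have "(\<Sum>b\<in>{1..NN}. 1 / real NN) < (\<Sum>b\<in>{1..NN}. pmf p b)"
    using NN_pos lt by (intro sum_strict_mono) auto
  also have "\<dots> \<le> (\<Sum>b\<in>DD. pmf p b)"
    by (rule sum_mono2) (auto simp: DD_def)
  also have "\<dots> = 1" using assms fin_DD by (rule sum_pmf_eq_1[rotated])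
  finally show False using NN_pos by simp
qed

lemma offset:
  assumes p: "set_pmf p \<subseteq> DD"
  shows "\<exists>M\<in>MMc. measure_pmf.expectation p (\<lambda>\<pi>. gval DD M \<pi> - \<gamma> * hellinger_sq (M \<pi>) (mdl 0 \<pi>)) \<ge> 1 / (32 * sqrt \<gamma>)"
proof -
  define q where "q = pmf p 0"
  have sg: "sqrt \<gamma> \<ge> 1" using g1 by simp
  have geta: "\<gamma> * eta = sqrt \<gamma>" unfolding eta_def using g1
    by (simp add: real_div_sqrt)
  have sum1: "(\<Sum>a\<in>DD. pmf p a) = 1" using p fin_DD by (rule sum_pmf_eq_1[rotated])
  have D0: "0 \<in> DD" by (simp add: DD_def)
  show ?thesis
  proof (cases "q \<ge> 1 / (16 * sqrt \<gamma>)")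
    case True
    have "measure_pmf.expectation p (\<lambda>\<pi>. gval DD (mdl 0) \<pi> - \<gamma> * hellinger_sq (mdl 0 \<pi>) (mdl 0 \<pi>))
        = (\<Sum>a\<in>DD. (if a = 0 then q / 2 else 0))"
      unfolding exp_DD[OF p] by (intro sum.cong) (auto simp: gval_mdl D0 hell_same q_def)
    also have "\<dots> = q / 2" using D0 fin_DD by simp
    finally have "measure_pmf.expectation p (\<lambda>\<pi>. gval DD (mdl 0) \<pi> - \<gamma> * hellinger_sq (mdl 0 \<pi>) (mdl 0 \<pi>)) \<ge> 1 / (32 * sqrt \<gamma>)"
      using True by simp
    moreover have "mdl 0 \<in> MMc" using D0 by (simp add: MMc_def)
    ultimately show ?thesis by blast
  next
    case False
    obtain b where b: "b \<in> {1..NN}" "pmf p b \<le> 1 / real NN" using pigeon[OF p] by blast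
    have bD: "b \<in> DD" using b by (simp add: DD_def)
    have b0: "b \<noteq> 0" using b by simp
    define h where "h a = (if a = 0 then 1 - 2 * sqrt \<gamma> else if a = b then - 2 * \<gamma> else 1/2)" for a
    have Fh: "gval DD (mdl b) a - \<gamma> * hellinger_sq (mdl b a) (mdl 0 a) \<ge> h a" if "a \<in> DD" for a
    proof -
      consider "a = 0" | "a = b" | "a \<noteq> 0" "a \<noteq> b" by blast
      then show ?thesis
      proof cases
        case 1
        have "\<gamma> * hellinger_sq (mdl b 0) (mdl 0 0) \<le> \<gamma> * (2 * eta)"
          using hell_inf[of b] g1 by (intro mult_left_mono) auto
        moreover have "\<gamma> * (2 * eta) = 2 * sqrt \<gamma>" using geta by simp
        moreover have "gval DD (mdl b) 0 = 1" by (simp add: gval_mdl bD b0)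
        moreover have "h 0 = 1 - 2 * sqrt \<gamma>" by (simp add: h_def)
        ultimately show ?thesis using 1 by simp
      next
        case 2
        have "hellinger_sq (mdl b a) (mdl 0 a) \<le> 2" using 2 b0 by (simp add: mdl_def hell_return)
        then show ?thesis using 2 b0 g1 by (simp add: gval_mdl bD h_def)
      next
        case 3
        have "hellinger_sq (mdl b a) (mdl 0 a) = 0" using 3 by (simp add: mdl_def hell_same)
        then show ?thesis using 3 b0 by (simp add: gval_mdl bD h_def)
      qed
    qed
    have "(\<Sum>a\<in>DD. h a * pmf p a) \<le> (\<Sum>a\<in>DD. (gval DD (mdl b) a - \<gamma> * hellinger_sq (mdl b a) (mdl 0 a)) * pmf p a)"
      by (intro sum_mono mult_right_mono Fh) auto
    also have "\<dots> = measure_pmf.expectation p (\<lambda>\<pi>. gval DD (mdl b) \<pi> - \<gamma> * hellinger_sq (mdl b \<pi>) (mdl 0 \<pi>))"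
      unfolding exp_DD[OF p] ..
    finally have E: "(\<Sum>a\<in>DD. h a * pmf p a) \<le> \<dots>" .
    have hs: "h a * pmf p a = (1/2) * pmf p a + (if a = 0 then (1/2 - 2 * sqrt \<gamma>) * q else 0)
        + (if a = b then (- 2 * \<gamma> - 1/2) * pmf p b else 0)" for a
      using b0 by (auto simp: h_def q_def algebra_simps)
    have "(\<Sum>a\<in>DD. h a * pmf p a) = (1/2) * (\<Sum>a\<in>DD. pmf p a) + (1/2 - 2 * sqrt \<gamma>) * q + (- 2 * \<gamma> - 1/2) * pmf p b"
      unfolding hs sum.distrib sum_distrib_left[symmetric] using D0 bD fin_DD by simp
    also have "\<dots> = 1/2 + (1/2) * q - 2 * sqrt \<gamma> * q - (2 * \<gamma> + 1/2) * pmf p b"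
      using sum1 by (simp add: algebra_simps)
    finally have hsum: "(\<Sum>a\<in>DD. h a * pmf p a) = 1/2 + (1/2) * q - 2 * sqrt \<gamma> * q - (2 * \<gamma> + 1/2) * pmf p b" .
    have q0: "q \<ge> 0" by (simp add: q_def)
    have t1: "2 * sqrt \<gamma> * q \<le> 1/8"
    proof -
      have "q < 1 / (16 * sqrt \<gamma>)" using False by simp
      then have "q * (16 * sqrt \<gamma>) < 1" using sg by (simp add: field_simps)
      then show ?thesis by (simp add: algebra_simps)
    qed
    have t2: "(2 * \<gamma> + 1/2) * pmf p b \<le> 5/32"
    proof -
      have "pmf p b \<le> 1 / (16 * \<gamma>)"
      proof -
        have "1 / real NN \<le> 1 / (16 * \<gamma>)" using NN_ge g1 by (intro divide_left_mono) auto
        then show ?thesis using b(2) by linarith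
      qed
      then have "(2 * \<gamma> + 1/2) * pmf p b \<le> (2 * \<gamma> + 1/2) * (1 / (16 * \<gamma>))"
        using g1 by (intro mult_left_mono) auto
      also have "\<dots> = 1/8 + 1 / (32 * \<gamma>)" using g1 by (simp add: field_simps)
      also have "\<dots> \<le> 1/8 + 1/32" using g1 by (simp add: field_simps)
      finally show ?thesis by simp
    qed
    have "1 / (32 * sqrt \<gamma>) \<le> 1/32" using sg by (simp add: field_simps)
    also have "\<dots> \<le> (\<Sum>a\<in>DD. h a * pmf p a)" unfolding hsum using t1 t2 q0 by linarith
    finally have "1 / (32 * sqrt \<gamma>) \<le> measure_pmf.expectation p (\<lambda>\<pi>. gval DD (mdl b) \<pi> - \<gamma> * hellinger_sq (mdl b \<pi>) (mdl 0 \<pi>))"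
      using E by linarith
    moreover have "mdl b \<in> MMc" using bD by (simp add: MMc_def)
    ultimately show ?thesis by blast
  qed
qed


lemma fin_MM: "finite MMc" by (simp add: MMc_def fin_DD)

end

lemma gval_nonneg: "finite D \<Longrightarrow> \<pi> \<in> D \<Longrightarrow> gval D M \<pi> \<ge> 0"
  unfolding gval_def by (auto intro!: cSUP_upper)

lemma exp_nonneg_g:
  assumes "finite D" "set_pmf p \<subseteq> D"
  shows "measure_pmf.expectation p (gval D M) \<ge> 0"
  by (rule integral_nonneg_AE) (use assms in \<open>auto simp: AE_measure_pmf_iff intro!: gval_nonneg\<close>)

lemma dec_c_le:
  assumes D: "finite D" and MSet: "finite MSet" and p: "p \<in> dists_on D" and B: "B \<ge> 0"
    and H: "\<And>M. M \<in> MSet \<Longrightarrow> measure_pmf.expectation p (\<lambda>\<pi>. hellinger_sq (M \<pi>) (Mbar \<pi>)) \<le> \<epsilon>\<^sup>2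
               \<Longrightarrow> measure_pmf.expectation p (gval D M) \<le> B"
  shows "dec_c D MSet Mbar \<epsilon> \<le> B"
proof -
  define V where "V p' = (let S = {measure_pmf.expectation p' (gval D M) | M.
                    M \<in> MSet \<and> measure_pmf.expectation p' (\<lambda>\<pi>. hellinger_sq (M \<pi>) (Mbar \<pi>)) \<le> \<epsilon>\<^sup>2}
         in if S = {} then 0 else Sup S)" for p'
  have Sfin: "finite {measure_pmf.expectation p' (gval D M) | M.
                    M \<in> MSet \<and> measure_pmf.expectation p' (\<lambda>\<pi>. hellinger_sq (M \<pi>) (Mbar \<pi>)) \<le> \<epsilon>\<^sup>2}" for p'
  proof -
    have "{measure_pmf.expectation p' (gval D M) | M.
                    M \<in> MSet \<and> measure_pmf.expectation p' (\<lambda>\<pi>. hellinger_sq (M \<pi>) (Mbar \<pi>)) \<le> \<epsilon>\<^sup>2}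
          \<subseteq> (\<lambda>M. measure_pmf.expectation p' (gval D M)) ` MSet" by auto
    then show ?thesis using MSet finite_subset by blast
  qed
  have V0: "V p' \<ge> 0" if "p' \<in> dists_on D" for p'
  proof (cases "{measure_pmf.expectation p' (gval D M) | M.
                    M \<in> MSet \<and> measure_pmf.expectation p' (\<lambda>\<pi>. hellinger_sq (M \<pi>) (Mbar \<pi>)) \<le> \<epsilon>\<^sup>2} = {}")
    case True then show ?thesis by (simp add: V_def)
  next
    case False
    then obtain M where M: "M \<in> MSet" "measure_pmf.expectation p' (\<lambda>\<pi>. hellinger_sq (M \<pi>) (Mbar \<pi>)) \<le> \<epsilon>\<^sup>2" by auto
    have "0 \<le> measure_pmf.expectation p' (gval D M)"
      using that D by (intro exp_nonneg_g) (auto simp: dists_on_def)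
    also have "\<dots> \<le> Sup {measure_pmf.expectation p' (gval D M) | M.
                    M \<in> MSet \<and> measure_pmf.expectation p' (\<lambda>\<pi>. hellinger_sq (M \<pi>) (Mbar \<pi>)) \<le> \<epsilon>\<^sup>2}"
      using M Sfin[of p'] by (intro cSup_upper) (auto intro: bdd_above_finite)
    finally show ?thesis using False by (simp add: V_def)
  qed
  have "dec_c D MSet Mbar \<epsilon> = (INF p'\<in>dists_on D. V p')" unfolding dec_c_def V_def ..
  also have "\<dots> \<le> V p" using p V0 by (intro cINF_lower) (auto simp: bdd_below_def)
  also have "\<dots> \<le> B"
  proof (cases "{measure_pmf.expectation p (gval D M) | M.
                    M \<in> MSet \<and> measure_pmf.expectation p (\<lambda>\<pi>. hellinger_sq (M \<pi>) (Mbar \<pi>)) \<le> \<epsilon>\<^sup>2} = {}")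
    case True then show ?thesis using B by (simp add: V_def)
  next
    case False
    then show ?thesis unfolding V_def Let_def using False
      by (auto intro!: cSup_least H)
  qed
  finally show ?thesis .
qed


locale mixl = cons_loc +
  fixes \<mu> :: "model pmf"
  assumes mu: "set_pmf \<mu> \<subseteq> MMc"
begin

definition "w b = pmf \<mu> (mdl b)"
definition "Mb \<pi> = bind_pmf \<mu> (\<lambda>M. M \<pi>)"

lemma w_nonneg: "w b \<ge> 0" by (simp add: w_def)

lemma mix_exp: "measure_pmf.expectation \<mu> h = (\<Sum>b\<in>DD. h (mdl b) * w b)"
proof -
  have "measure_pmf.expectation \<mu> h = (\<Sum>M\<in>MMc. h M * pmf \<mu> M)"
    using mu fin_MM by (intro integral_measure_pmf_real) auto
  also have "\<dots> = (\<Sum>b\<in>DD. h (mdl b) * w b)"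
    unfolding MMc_def w_def by (subst sum.reindex[OF inj_mdl]) simp
  finally show ?thesis .
qed

lemma sum_w: "(\<Sum>b\<in>DD. w b) = 1"
proof -
  have "(\<Sum>M\<in>MMc. pmf \<mu> M) = 1" using mu fin_MM by (intro sum_pmf_eq_1) auto
  then show ?thesis unfolding MMc_def w_def by (subst (asm) sum.reindex[OF inj_mdl]) simp
qed

lemma w_le1: "w b \<le> 1" by (simp add: w_def pmf_le_1)

lemma fval_Mb: "fval Mb a = (\<Sum>b\<in>DD. w b * fval (mdl b) a)"
proof -
  have "fval Mb a = (\<Sum>M\<in>MMc. pmf \<mu> M *\<^sub>R measure_pmf.expectation (M a) fst)"
    unfolding fval_def Mb_def
    by (rule pmf_expectation_bind) (use mu fin_MM in \<open>auto simp: MMc_def set_mdl_fin\<close>)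
  also have "\<dots> = (\<Sum>b\<in>DD. w b * fval (mdl b) a)"
    unfolding MMc_def w_def fval_def by (subst sum.reindex[OF inj_mdl]) simp
  finally show ?thesis .
qed

lemma fval_Mb_arm: "a \<noteq> 0 \<Longrightarrow> a \<in> DD \<Longrightarrow> fval Mb a = 1/2 + w a / 2"
proof -
  assume a: "a \<noteq> 0" "a \<in> DD"
  have "fval Mb a = (\<Sum>b\<in>DD. w b / 2 + (if b = a then w a / 2 else 0))"
    unfolding fval_Mb fval_mdl using a by (intro sum.cong) auto
  also have "\<dots> = (\<Sum>b\<in>DD. w b) / 2 + w a / 2"
    using a fin_DD by (simp add: sum.distrib sum_divide_distrib)
  finally show ?thesis using sum_w by simp
qed

lemma fval_Mb0: "fval Mb 0 = 0"
  unfolding fval_Mb fval_mdl by simp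

lemma pmf_Mb0: "b \<noteq> 0 \<Longrightarrow> b \<in> DD \<Longrightarrow> pmf (Mb 0) (0, b) = eta * w b"
proof -
  assume b: "b \<noteq> 0" "b \<in> DD"
  have "pmf (Mb 0) (0, b) = (\<Sum>b'\<in>DD. pmf (mdl b' 0) (0, b) * w b')"
    unfolding Mb_def pmf_bind mix_exp ..
  also have "\<dots> = (\<Sum>b'\<in>DD. if b' = b then eta * w b else 0)"
    using b by (intro sum.cong) (auto simp: pmf_inf1 pmf_inf_other)
  also have "\<dots> = eta * w b" using b fin_DD by simp
  finally show ?thesis .
qed

lemma set_Mb0: "set_pmf (Mb 0) \<subseteq> {0} \<times> DD"
  using mu set_mdl0 unfolding Mb_def MMc_def by fastforce


lemma hell_lower:
  assumes b: "b \<noteq> 0" "b \<in> DD"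
  shows "hellinger_sq (mdl b 0) (Mb 0) \<ge> eta * (1 - sqrt (w b))\<^sup>2"
proof -
  have "hellinger_sq (mdl b 0) (Mb 0) = (\<Sum>z\<in>{0}\<times>DD. (sqrt (pmf (mdl b 0) z) - sqrt (pmf (Mb 0) z))\<^sup>2)"
    by (rule hell_fin) (use set_mdl0[OF b(2)] set_Mb0 fin_DD in auto)
  also have "\<dots> \<ge> (sqrt (pmf (mdl b 0) (0,b)) - sqrt (pmf (Mb 0) (0,b)))\<^sup>2"
    by (rule member_le_sum) (use b fin_DD in auto)
  also have "(sqrt (pmf (mdl b 0) (0,b)) - sqrt (pmf (Mb 0) (0,b)))\<^sup>2 = (sqrt eta - sqrt eta * sqrt (w b))\<^sup>2"
    using b by (simp add: pmf_inf1 pmf_Mb0 real_sqrt_mult)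
  also have "\<dots> = (sqrt eta)\<^sup>2 * (1 - sqrt (w b))\<^sup>2"
  proof -
    have "sqrt eta - sqrt eta * sqrt (w b) = sqrt eta * (1 - sqrt (w b))" by (simp add: algebra_simps)
    then show ?thesis by (simp only: power_mult_distrib)
  qed
  also have "\<dots> = eta * (1 - sqrt (w b))\<^sup>2" using eta_pos by simp
  finally show ?thesis .
qed

lemma constr:
  assumes e: "0 < \<epsilon>"
  shows "dec_c DD (MMc \<union> {Mb}) Mb \<epsilon> \<le> 16 * \<epsilon>\<^sup>2 * sqrt \<gamma>"
proof -
  define B where "B = 16 * \<epsilon>\<^sup>2 * sqrt \<gamma>"
  have B0: "B \<ge> 0" unfolding B_def using g1 by simp
  have ne: "w ` {1..NN} \<noteq> {}" using NN_pos by auto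
  obtain a where a: "a \<in> {1..NN}" "w a = Max (w ` {1..NN})"
    using Max_in[OF _ ne] by auto
  have amax: "w b \<le> w a" if "b \<in> {1..NN}" for b
    using a(2) that by simp
  have aD: "a \<in> DD" "a \<noteq> 0" using a(1) by (auto simp: DD_def)
  have sup: "(SUP \<pi>\<in>DD. fval Mb \<pi>) = fval Mb a"
  proof (rule cSup_eq_maximum)
    show "fval Mb a \<in> fval Mb ` DD" using aD by simp
    show "x \<le> fval Mb a" if "x \<in> fval Mb ` DD" for x
    proof -
      obtain \<pi> where \<pi>: "\<pi> \<in> DD" "x = fval Mb \<pi>" using \<open>x \<in> _\<close> by auto
      show ?thesis
      proof (cases "\<pi> = 0")
        case True then show ?thesis using \<pi> aD w_nonneg[of a] by (simp add: fval_Mb0 fval_Mb_arm)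
      next
        case False
        then have "\<pi> \<in> {1..NN}" using \<pi> by (auto simp: DD_def)
        then show ?thesis using \<pi> aD False amax by (simp add: fval_Mb_arm)
      qed
    qed
  qed
  have gMa: "gval DD Mb a = 0" unfolding gval_def sup by simp
  have gM0: "gval DD Mb 0 \<le> 1" unfolding gval_def sup fval_Mb0 using aD w_le1[of a] by (simp add: fval_Mb_arm)
  define q where "q = min B 1"
  have q01: "0 \<le> q" "q \<le> 1" "q \<le> B" using B0 by (auto simp: q_def)
  define p where "p = map_pmf (\<lambda>x. if x then 0 else a) (bernoulli_pmf q)"
  have pexp: "measure_pmf.expectation p F = q * F 0 + (1 - q) * F a" for F :: "nat \<Rightarrow> real"
    unfolding p_def using q01 by simp
  have pD: "p \<in> dists_on DD" unfolding p_def dists_on_def using aD by (auto simp: DD_def)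
  have easy: "measure_pmf.expectation p (gval DD M) \<le> B" if "gval DD M a = 0" "gval DD M 0 \<le> 1" for M
  proof -
    have "q * gval DD M 0 \<le> q" using that q01 by (simp add: mult_left_le)
    then show ?thesis unfolding pexp using that q01 by simp
  qed
  have "dec_c DD (MMc \<union> {Mb}) Mb \<epsilon> \<le> B"
  proof (rule dec_c_le[OF fin_DD _ pD B0])
    show "finite (MMc \<union> {Mb})" using fin_MM by simp
    fix M assume M: "M \<in> MMc \<union> {Mb}"
      and H: "measure_pmf.expectation p (\<lambda>\<pi>. hellinger_sq (M \<pi>) (Mb \<pi>)) \<le> \<epsilon>\<^sup>2"
    show "measure_pmf.expectation p (gval DD M) \<le> B"
    proof (cases "M = Mb")
      case True then show ?thesis using gMa gM0 easy by simp
    next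
      case False
      then obtain b where b: "b \<in> DD" "M = mdl b" using M by (auto simp: MMc_def)
      show ?thesis
      proof (cases "b = 0 \<or> b = a")
        case True
        then show ?thesis using b aD by (intro easy) (auto simp: gval_mdl)
      next
        case False
        then have b1: "b \<in> {1..NN}" "b \<noteq> 0" "b \<noteq> a" using b by (auto simp: DD_def)
        show ?thesis
        proof (cases "q = 1")
          case True
          then show ?thesis unfolding pexp using b b1 q01 by (simp add: gval_mdl)
        next
          case False
          then have qB: "q = B" by (auto simp: q_def)
          have "w b + w a = (\<Sum>x\<in>{b,a}. w x)" using b1 by simp
          also have "\<dots> \<le> (\<Sum>x\<in>DD. w x)" using b aD fin_DD w_nonneg by (intro sum_mono2) auto
          finally have "w b + w a \<le> 1" using sum_w by simp
          then have wb: "w b \<le> 1/2" using amax[OF b1(1)] by simp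
          have "sqrt (w b) \<le> sqrt (0.71\<^sup>2)" using wb by (intro real_sqrt_le_mono) (simp add: power2_eq_square)
          then have sw: "sqrt (w b) \<le> 0.71" by simp
          have "0.29\<^sup>2 \<le> (1 - sqrt (w b))\<^sup>2" using sw by (intro power_mono) auto
          then have sq: "0.0841 \<le> (1 - sqrt (w b))\<^sup>2" by (simp add: power2_eq_square)
          have Hn: "hellinger_sq (mdl b a) (Mb a) \<ge> 0" by (rule hell_nonneg)
          have "q * hellinger_sq (mdl b 0) (Mb 0) \<le> measure_pmf.expectation p (\<lambda>\<pi>. hellinger_sq (M \<pi>) (Mb \<pi>))"
            unfolding pexp using b Hn q01 by simp
          also have "\<dots> \<le> \<epsilon>\<^sup>2" by (rule H)
          finally have le: "q * hellinger_sq (mdl b 0) (Mb 0) \<le> \<epsilon>\<^sup>2" .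
          have "q * (eta * (1 - sqrt (w b))\<^sup>2) \<le> q * hellinger_sq (mdl b 0) (Mb 0)"
            using hell_lower[OF b1(2) b(1)] q01 by (intro mult_left_mono) auto
          moreover have qe: "q * eta = 16 * \<epsilon>\<^sup>2" unfolding qB B_def eta_def using g1 by simp
          moreover have "q * (eta * (1 - sqrt (w b))\<^sup>2) = 16 * \<epsilon>\<^sup>2 * (1 - sqrt (w b))\<^sup>2"
            by (subst mult.assoc[symmetric]) (simp only: qe)
          ultimately have "16 * \<epsilon>\<^sup>2 * (1 - sqrt (w b))\<^sup>2 \<le> \<epsilon>\<^sup>2" using le
            by linarith
          moreover have "16 * \<epsilon>\<^sup>2 * 0.0841 \<le> 16 * \<epsilon>\<^sup>2 * (1 - sqrt (w b))\<^sup>2"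
            using sq by (intro mult_left_mono) auto
          moreover have "\<epsilon>\<^sup>2 < 16 * \<epsilon>\<^sup>2 * 0.0841" using e by simp
          ultimately show ?thesis by linarith
        qed
      qed
    qed
  qed
  then show ?thesis by (simp add: B_def)
qed

end

lemma main_gamma:
  assumes g: "\<gamma> \<ge> 1"
  shows "\<exists>(Dec :: nat set) (MM :: model set). Dec \<noteq> {} \<and> MM \<subseteq> models_all Dec \<and>
         (\<forall>\<epsilon> :: real. 0 < \<epsilon> \<and> \<epsilon> < 1 \<longrightarrow> dec_c_glob Dec MM \<epsilon> \<le> 16 * \<epsilon>\<^sup>2 * sqrt \<gamma>) \<and>
         (\<exists>Mbar\<in>MM. dec_o Dec MM Mbar \<gamma> \<ge> (1/32) / sqrt \<gamma>)"
proof -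
  interpret cons_loc \<gamma> using g by unfold_locales
  have D0: "0 \<in> DD" by (simp add: DD_def)
  have m0: "mdl 0 \<in> MMc" using D0 by (simp add: MMc_def)
  have glob: "dec_c_glob DD MMc \<epsilon> \<le> 16 * \<epsilon>\<^sup>2 * sqrt \<gamma>" if e: "0 < \<epsilon>" for \<epsilon>
    unfolding dec_c_glob_def
  proof (rule cSUP_least)
    show "co_models MMc \<noteq> {}"
      unfolding co_models_def using m0
      by (auto intro!: exI[of _ "\<lambda>\<pi>. bind_pmf (return_pmf (mdl 0)) (\<lambda>M. M \<pi>)"] exI[of _ "return_pmf (mdl 0)"])
    fix Mbar assume "Mbar \<in> co_models MMc"
    then obtain \<mu> where muh: "set_pmf \<mu> \<subseteq> MMc" "Mbar = (\<lambda>\<pi>. bind_pmf \<mu> (\<lambda>M. M \<pi>))"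
      unfolding co_models_def by auto
    interpret mixl \<gamma> \<mu> using muh(1) by unfold_locales
    have "Mbar = Mb" unfolding muh(2) Mb_def ..
    then show "dec_c DD (MMc \<union> {Mbar}) Mbar \<epsilon> \<le> 16 * \<epsilon>\<^sup>2 * sqrt \<gamma>" using constr[OF e] by simp
  qed
  have off: "dec_o DD MMc (mdl 0) \<gamma> \<ge> (1/32) / sqrt \<gamma>"
    unfolding dec_o_def
  proof (rule cINF_greatest)
    show "dists_on DD \<noteq> {}" unfolding dists_on_def using D0
      by (auto intro!: exI[of _ "return_pmf 0"])
    fix p assume "p \<in> dists_on DD"
    then have p: "set_pmf p \<subseteq> DD" by (simp add: dists_on_def)
    obtain M where M: "M \<in> MMc"
      "measure_pmf.expectation p (\<lambda>\<pi>. gval DD M \<pi> - \<gamma> * hellinger_sq (M \<pi>) (mdl 0 \<pi>)) \<ge> 1 / (32 * sqrt \<gamma>)"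
      using offset[OF p] by blast
    have "1 / (32 * sqrt \<gamma>) \<le> (SUP M\<in>MMc. measure_pmf.expectation p (\<lambda>\<pi>. gval DD M \<pi> - \<gamma> * hellinger_sq (M \<pi>) (mdl 0 \<pi>)))"
      using M fin_MM by (intro order_trans[OF M(2)] cSUP_upper) (auto intro: bdd_above_finite)
    then show "(1/32) / sqrt \<gamma> \<le> (SUP M\<in>MMc. measure_pmf.expectation p (\<lambda>\<pi>. gval DD M \<pi> - \<gamma> * hellinger_sq (M \<pi>) (mdl 0 \<pi>)))"
      by simp
  qed
  show ?thesis
    using DD_ne MM_sub glob off m0 by blast
qed

theorem proposition4p4:
  shows "\<exists>c1 c2 :: real. c1 > 0 \<and> c2 > 0 \<and>
    (\<forall>\<gamma> :: real. \<gamma> \<ge> 1 \<longrightarrow>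
      (\<exists>(Dec :: nat set) (MM :: model set). Dec \<noteq> {} \<and> MM \<subseteq> models_all Dec \<and>
         (\<forall>\<epsilon> :: real. 0 < \<epsilon> \<and> \<epsilon> < 1 \<longrightarrow> dec_c_glob Dec MM \<epsilon> \<le> c1 * \<epsilon>\<^sup>2 * sqrt \<gamma>) \<and>
         (\<exists>Mbar\<in>MM. dec_o Dec MM Mbar \<gamma> \<ge> c2 / sqrt \<gamma>)))"
  apply (rule exI[of _ 16], rule exI[of _ "1/32"])
  using main_gamma by simp

end
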